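(* Let $n$ and $r$ be positive integers with $n\geq 2r$. For positive integers $l,k$ define the rational number $$m_r(l,k):=\frac{1}{k}\left(lr-\sum_{i=1}^{k-1}i\binom{l}{i}\right).$$ Let $l$ be the minimal positive integer such that there exists a positive integer $k\leq l+1$ satisfying $$0\leq m_r(l,k)\leq\binom{l}{k}\quad\text{and}\quad \sum_{i=0}^{k-1}\binom{l}{i}+m_r(l,k)\geq n.$$ Then $b(\mathrm{S}_{n,r})=b(\mathrm{A}_{n+1,r})=l$.
   Context: For a permutation group $G$ acting on a set $\Omega$, a base is a subset $\mathcal{B}\subseteq\Omega$ whose pointwise stabiliser in $G$ is trivial, and $b(G)$ denotes the minimum size of a base. Write $[n]=\{1,\dots,n\}$. $\mathrm{S}_{n,r}$ denotes the symmetric group $\mathrm{S}_n$ acting naturally on the set of $r$-element subsets of $[n]$, and $\mathrm{A}_{n+1,r}$ denotes the alternating group $\mathrm{A}_{n+1}$ acting naturally on the set of $r$-element subsets of $[n+1]$. Binomial coefficients $\binom{l}{k}$ with $k>l$ are $0$. *)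

theory Defs
  imports "HOL-Combinatorics.Permutations" Complex_Main
begin

definition r_subsets :: "nat \<Rightarrow> nat \<Rightarrow> nat set set" where
  "r_subsets N r = {A. A \<subseteq> {1..N} \<and> card A = r}"

definition Sym :: "nat \<Rightarrow> (nat \<Rightarrow> nat) set" where
  "Sym n = {\<sigma>. \<sigma> permutes {1..n}}"

definition Alt :: "nat \<Rightarrow> (nat \<Rightarrow> nat) set" where
  "Alt n = {\<sigma>. \<sigma> permutes {1..n} \<and> evenperm \<sigma>}"

definition is_base :: "(nat \<Rightarrow> nat) set \<Rightarrow> nat set set \<Rightarrow> nat set set \<Rightarrow> bool" where
  "is_base G \<Omega> B \<longleftrightarrow> B \<subseteq> \<Omega> \<and> (\<forall>g\<in>G. (\<forall>A\<in>B. g ` A = A) \<longrightarrow> g = id)"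

definition base_size :: "(nat \<Rightarrow> nat) set \<Rightarrow> nat set set \<Rightarrow> nat" where
  "base_size G \<Omega> = (LEAST k. \<exists>B. is_base G \<Omega> B \<and> finite B \<and> card B = k)"

definition m_r :: "nat \<Rightarrow> nat \<Rightarrow> nat \<Rightarrow> rat" where
  "m_r r l k = (of_nat (l * r) - (\<Sum>i=1..k-1. of_nat (i * (l choose i)))) / of_nat k"

definition good_l :: "nat \<Rightarrow> nat \<Rightarrow> nat \<Rightarrow> bool" where
  "good_l n r l \<longleftrightarrow> (\<exists>k. 0 < k \<and> k \<le> l + 1 \<and>
      0 \<le> m_r r l k \<and> m_r r l k \<le> of_nat (l choose k) \<and>
      (\<Sum>i=0..k-1. of_nat (l choose i)) + m_r r l k \<ge> of_nat n)"

end

theory Submission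
  imports Defs
begin

lemma group_sum:
  fixes f :: "nat \<Rightarrow> nat"
  assumes "finite C"
  shows "(\<Sum>S\<in>{S. S \<subseteq> C \<and> card S < k}. f (card S)) = (\<Sum>i<k. (card C choose i) * f i)"
proof (induction k)
  case 0 then show ?case by simp
next
  case (Suc k)
  have eq: "{S. S \<subseteq> C \<and> card S < Suc k} = {S. S \<subseteq> C \<and> card S < k} \<union> {S. S \<subseteq> C \<and> card S = k}"
    by auto
  have fin: "finite {S. S \<subseteq> C \<and> card S < k}" "finite {S. S \<subseteq> C \<and> card S = k}"
    using assms by (auto intro: finite_subset[of _ "Pow C"])
  have "(\<Sum>S\<in>{S. S \<subseteq> C \<and> card S = k}. f (card S)) = (\<Sum>S\<in>{S. S \<subseteq> C \<and> card S = k}. f k)"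
    by (rule sum.cong) auto
  also have "\<dots> = (card C choose k) * f k" using n_subsets[OF assms, of k] by simp
  finally have "(\<Sum>S\<in>{S. S \<subseteq> C \<and> card S = k}. f (card S)) = (card C choose k) * f k" .
  then show ?case unfolding eq using Suc fin by (subst sum.union_disjoint) auto
qed

lemma sum_shift1:
  fixes f :: "nat \<Rightarrow> nat"
  assumes "0 < k" "f 0 = 0"
  shows "(\<Sum>i=1..k-1. f i) = (\<Sum>i<k. f i)"
proof -
  have "{..<k} = insert 0 {1..k-1}" using assms by auto
  then show ?thesis using assms by simp
qed

lemma m_r_alt:
  assumes "0 < k"
  shows "m_r r l k = (of_nat (l*r) - of_nat (\<Sum>i<k. i * (l choose i))) / of_nat k"
proof -
  have "(\<Sum>i=1..k-1. (of_nat (i * (l choose i))::rat)) = of_nat (\<Sum>i=1..k-1. i * (l choose i))"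
    by simp
  also have "\<dots> = of_nat (\<Sum>i<k. i * (l choose i))" using sum_shift1[OF assms, of "\<lambda>i. i * (l choose i)"] by simp
  finally show ?thesis unfolding m_r_def by simp
qed

lemma N_alt:
  assumes "0 < k"
  shows "(\<Sum>i=0..k-1. (of_nat (l choose i)::rat)) = of_nat (\<Sum>i<k. l choose i)"
proof -
  have "{0..k-1} = {..<k}" using assms by auto
  then show ?thesis by simp
qed

lemma good_l_intro:
  assumes "0 < k" "k \<le> l + 1" "(\<Sum>i<k. i * (l choose i)) \<le> l*r"
    "l*r \<le> (\<Sum>i<k. i * (l choose i)) + k * (l choose k)"
    "n*k + (\<Sum>i<k. i * (l choose i)) \<le> (\<Sum>i<k. l choose i)*k + l*r"
  shows "good_l n r l"
  unfolding good_l_def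
proof (intro exI[of _ k] conjI)
  define W where "W = (\<Sum>i<k. i * (l choose i))"
  define N where "N = (\<Sum>i<k. l choose i)"
  have kq: "(of_nat k::rat) > 0" using assms by simp
  have m: "m_r r l k = (of_nat (l*r) - of_nat W) / of_nat k" using m_r_alt[OF assms(1)] W_def by simp
  show "0 < k" "k \<le> l+1" by fact+
  have "(of_nat W::rat) \<le> of_nat (l*r)" using assms(3) W_def by (simp only: of_nat_le_iff)
  then show "0 \<le> m_r r l k" unfolding m using kq by (simp add: divide_simps)
  have "of_nat (l*r) \<le> (of_nat W + of_nat k * of_nat (l choose k) :: rat)"
    using assms(4) W_def by (metis of_nat_add of_nat_le_iff of_nat_mult)
  then show "m_r r l k \<le> of_nat (l choose k)" unfolding m using kq by (simp add: divide_simps algebra_simps)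
  have "of_nat n * of_nat k + of_nat W \<le> (of_nat N * of_nat k + of_nat (l*r) :: rat)"
    using assms(5) W_def N_def by (metis of_nat_add of_nat_le_iff of_nat_mult)
  then show "of_nat n \<le> (\<Sum>i=0..k-1. of_nat (l choose i)) + m_r r l k"
    unfolding m N_alt[OF assms(1)] N_def[symmetric] using kq by (simp add: divide_simps algebra_simps)
qed

lemma good_l_elim:
  assumes "good_l n r l"
  obtains k q where "0 < k" "k \<le> l + 1" "(\<Sum>i<k. i * (l choose i)) + k * q \<le> l*r"
    "q \<le> l choose k" "n \<le> (\<Sum>i<k. l choose i) + q"
proof -
  obtain k where k: "0 < k" "k \<le> l + 1" "0 \<le> m_r r l k" "m_r r l k \<le> of_nat (l choose k)"
     "(\<Sum>i=0..k-1. of_nat (l choose i)) + m_r r l k \<ge> of_nat n"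
    using assms unfolding good_l_def by blast
  define W where "W = (\<Sum>i<k. i * (l choose i))"
  define N where "N = (\<Sum>i<k. l choose i)"
  define m where "m = m_r r l k"
  have kq: "(of_nat k::rat) > 0" using k by simp
  have m: "m = (of_nat (l*r) - of_nat W) / of_nat k" using m_r_alt[OF k(1)] W_def m_def by simp
  have km: "of_nat k * m = of_nat (l*r) - of_nat W" unfolding m using kq by simp
  define q where "q = nat \<lfloor>m\<rfloor>"
  have fl0: "\<lfloor>m\<rfloor> \<ge> 0" using k(3) m_def by simp
  have qm: "of_nat q \<le> m" unfolding q_def using fl0 by (simp add: of_nat_nat)
  have "of_nat q \<le> (of_nat (l choose k)::rat)" using qm k(4) m_def by linarith
  then have q1: "q \<le> l choose k" by simp
  have "of_nat k * of_nat q \<le> of_nat k * m" using qm kq by (simp add: mult_left_mono)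
  then have "of_nat (W + k * q) \<le> (of_nat (l*r)::rat)" using km by simp
  then have q2: "W + k * q \<le> l*r" by (simp only: of_nat_le_iff)
  have "of_nat n \<le> of_nat N + m" using k(5) N_alt[OF k(1)] N_def m_def by simp
  then have "of_int (int n - int N) \<le> m" by simp
  then have "int n - int N \<le> \<lfloor>m\<rfloor>" by (simp only: le_floor_iff)
  then have q3: "n \<le> N + q" unfolding q_def using fl0 by linarith
  show ?thesis using that k(1,2) q1 q2 q3 W_def N_def by blast
qed


lemma lower_good:
  assumes fin: "finite C" and V: "V \<subseteq> Pow C" "card V = n" and wt: "(\<Sum>v\<in>V. card v) \<le> card C * r"
    and nr: "2*r \<le> n" and r: "0 < r"
  shows "0 < card C \<and> good_l n r (card C)"
proof -
  define l where "l = card C"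
  define W where "W k = (\<Sum>i<k. i * (l choose i))" for k
  define N where "N k = (\<Sum>i<k. l choose i)" for k
  have "n \<le> card (Pow C)" using V fin by (metis card_mono finite_Pow_iff)
  then have n2: "n \<le> 2 ^ l" using fin by (simp add: card_Pow l_def)
  have l0: "0 < l" proof (rule ccontr)
    assume "\<not> 0 < l" then have "l = 0" by simp
    then show False using n2 nr r by simp
  qed
  have "(2::nat) ^ l = 2 * 2 ^ (l - 1)" using l0 by (metis Suc_diff_1 power_Suc)
  then have "r \<le> 2 ^ (l - 1)" using n2 nr by linarith
  then have "l * r \<le> l * 2 ^ (l-1)" by simp
  also have "\<dots> = W (l+1)" unfolding W_def using choose_linear_sum[of l]
    by (simp add: lessThan_Suc_atMost)
  finally have lrW: "l * r \<le> W (l + 1)" .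
  define k where "k = (LEAST k. 0 < k \<and> l * r \<le> W (k+1))"
  have kex: "0 < l \<and> l * r \<le> W (l+1)" using l0 lrW by simp
  have k1: "0 < k \<and> l * r \<le> W (k+1)" unfolding k_def by (rule LeastI[of _ l], rule kex)
  have k2: "k \<le> l" unfolding k_def by (rule Least_le, rule kex)
  have Wk: "W k \<le> l * r"
  proof (cases "k = 1")
    case True then show ?thesis by (simp add: W_def)
  next
    case False
    then have "k - 1 < k" "0 < k - 1" using k1 by auto
    then have "\<not> (0 < k - 1 \<and> l * r \<le> W (k - 1 + 1))" unfolding k_def
      using not_less_Least k_def by blast
    then show ?thesis using \<open>0 < k - 1\<close> by simp
  qed
  have Wsuc: "W (k+1) = W k + k * (l choose k)" unfolding W_def by simp
  have A1: "n * k \<le> (\<Sum>v\<in>V. (k - card v)) + (\<Sum>v\<in>V. card v)"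
  proof -
    have "n * k = (\<Sum>v\<in>V. k)" using V by simp
    also have "\<dots> \<le> (\<Sum>v\<in>V. (k - card v) + card v)" by (rule sum_mono) simp
    also have "\<dots> = (\<Sum>v\<in>V. (k - card v)) + (\<Sum>v\<in>V. card v)" by (simp add: sum.distrib)
    finally show ?thesis .
  qed
  have "(\<Sum>v\<in>V. (k - card v)) \<le> (\<Sum>S\<in>{S. S \<subseteq> C \<and> card S < l + 1}. (k - card S))"
  proof (rule sum_mono2)
    show "finite {S. S \<subseteq> C \<and> card S < l + 1}" using fin by (auto intro: finite_subset[of _ "Pow C"])
    show "V \<subseteq> {S. S \<subseteq> C \<and> card S < l + 1}" using V fin l_def by (auto intro: card_mono le_imp_less_Suc)
  qed simp
  also have "\<dots> = (\<Sum>i<l+1. (l choose i) * (k - i))" using group_sum[OF fin] l_def by simp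
  also have "\<dots> = (\<Sum>i<k. (l choose i) * (k - i))"
    by (rule sum.mono_neutral_right) (use k2 in auto)
  finally have A: "n * k \<le> (\<Sum>i<k. (l choose i) * (k - i)) + l * r" using A1 wt unfolding l_def by linarith
  have B: "(\<Sum>i<k. (l choose i) * (k - i)) + W k = N k * k"
    unfolding W_def N_def sum_distrib_right sum.distrib[symmetric]
    by (rule sum.cong) (auto simp: algebra_simps diff_mult_distrib2)
  have "good_l n r l"
    apply (rule good_l_intro[of k])
    using k1 k2 Wk Wsuc A B unfolding W_def N_def by auto
  then show ?thesis using l0 l_def by simp
qed

lemma construct_family:
  assumes "good_l n r l"
  shows "\<exists>F. F \<subseteq> Pow {1..l} \<and> card F = n \<and> (\<Sum>S\<in>F. card S) \<le> l * r"
proof -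
  obtain k q where k: "0 < k" "k \<le> l + 1" "(\<Sum>i<k. i * (l choose i)) + k * q \<le> l*r"
    "q \<le> l choose k" "n \<le> (\<Sum>i<k. l choose i) + q"
    using good_l_elim[OF assms] by blast
  define C where "C = {1..l::nat}"
  have fin: "finite C" and cC: "card C = l" by (auto simp: C_def)
  define P where "P = {S. S \<subseteq> C \<and> card S < k}"
  define Q where "Q = {S. S \<subseteq> C \<and> card S = k}"
  have finP: "finite P" "finite Q" using fin unfolding P_def Q_def by (auto intro: finite_subset[of _ "Pow C"])
  have "card Q = l choose k" unfolding Q_def using n_subsets[OF fin] cC by simp
  then obtain K where K: "K \<subseteq> Q" "card K = q" using k(4) by (metis obtain_subset_with_card_n)
  have finK: "finite K" using K finP finite_subset by blast
  define H where "H = P \<union> K"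
  have disj: "P \<inter> K = {}" using K unfolding P_def Q_def by auto
  have cP: "card P = (\<Sum>i<k. l choose i)"
    using group_sum[OF fin, of "\<lambda>_. 1" k] cC unfolding P_def by simp
  have wP: "(\<Sum>S\<in>P. card S) = (\<Sum>i<k. i * (l choose i))"
    using group_sum[OF fin, of "\<lambda>i. i" k] cC unfolding P_def by (simp add: mult.commute)
  have wK: "(\<Sum>S\<in>K. card S) = k * q"
  proof -
    have "(\<Sum>S\<in>K. card S) = (\<Sum>S\<in>K. k)" by (rule sum.cong) (use K Q_def in auto)
    then show ?thesis using K by simp
  qed
  have cH: "card H = (\<Sum>i<k. l choose i) + q" unfolding H_def using card_Un_disjoint[OF finP(1) finK disj] cP K by simp
  have wH: "(\<Sum>S\<in>H. card S) \<le> l * r" unfolding H_def using sum.union_disjoint[OF finP(1) finK disj, of card] wP wK k(3) by simp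
  have finH: "finite H" using finP finK H_def by simp
  obtain F where F: "F \<subseteq> H" "card F = n" using k(5) cH by (metis obtain_subset_with_card_n)
  have "(\<Sum>S\<in>F. card S) \<le> (\<Sum>S\<in>H. card S)" by (rule sum_mono2[OF finH F(1)]) simp
  moreover have "H \<subseteq> Pow C" unfolding H_def P_def using K Q_def by auto
  ultimately show ?thesis using F wH C_def by (intro exI[of _ F]) auto
qed


definition deg :: "nat set set \<Rightarrow> nat \<Rightarrow> nat" where
  "deg F a = card {S\<in>F. a \<in> S}"

lemma double_count:
  assumes "finite C" "F \<subseteq> Pow C"
  shows "(\<Sum>S\<in>F. card S) = (\<Sum>a\<in>C. deg F a)"
proof -
  have finF: "finite F" using assms by (metis finite_Pow_iff finite_subset)
  have "(\<Sum>S\<in>F. card S) = (\<Sum>S\<in>F. \<Sum>a\<in>C. if a \<in> S then 1 else 0)"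
  proof (rule sum.cong)
    fix S assume "S \<in> F"
    then have "S \<subseteq> C" using assms by auto
    then have "S = {a\<in>C. a \<in> S}" by auto
    then show "card S = (\<Sum>a\<in>C. if a \<in> S then 1 else 0)"
      using assms(1) by (simp add: sum.If_cases) (metis Int_absorb1 \<open>S \<subseteq> C\<close> inf_commute)
  qed simp
  also have "\<dots> = (\<Sum>a\<in>C. \<Sum>S\<in>F. if a \<in> S then 1 else 0)" by (rule sum.swap)
  also have "\<dots> = (\<Sum>a\<in>C. deg F a)"
    unfolding deg_def using finF by (simp add: sum.If_cases Int_def)
  finally show ?thesis .
qed

lemma replace_props:
  assumes finC: "finite C" and F: "F \<subseteq> Pow C" and S: "S \<in> F" and S': "S' \<notin> F" "S' \<subseteq> C"
  defines "F' \<equiv> insert S' (F - {S})"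
  shows "F' \<subseteq> Pow C" "card F' = card F"
    "deg F' x + (if x \<in> S then 1 else 0) = deg F x + (if x \<in> S' then 1 else 0)"
    "(\<Sum>T\<in>F'. card T) + card S = (\<Sum>T\<in>F. card T) + card S'"
proof -
  have finF: "finite F" using assms by (metis finite_Pow_iff finite_subset)
  show "F' \<subseteq> Pow C" using F S' unfolding F'_def by auto
  have "card F > 0" using finF S card_gt_0_iff by blast
  then show "card F' = card F" unfolding F'_def using finF S S' by (simp add: card_Diff_singleton)
  have e: "{T\<in>F'. x \<in> T} = (if x \<in> S' then insert S' ({T\<in>F. x \<in> T} - {S}) else {T\<in>F. x \<in> T} - {S})"
    unfolding F'_def by auto
  have f: "finite {T\<in>F. x \<in> T}" using finF by simp
  show "deg F' x + (if x \<in> S then 1 else 0) = deg F x + (if x \<in> S' then 1 else 0)"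
    unfolding deg_def e using S S' f card_gt_0_iff[of "{T\<in>F. x \<in> T}"]
    by (cases "x \<in> S"; cases "x \<in> S'") (auto simp: card_Diff_singleton card_insert_if)
  have "(\<Sum>T\<in>F'. card T) = card S' + (\<Sum>T\<in>F - {S}. card T)" unfolding F'_def using finF S' by simp
  moreover have "(\<Sum>T\<in>F. card T) = card S + (\<Sum>T\<in>F - {S}. card T)" using finF S by (simp add: sum.remove)
  ultimately show "(\<Sum>T\<in>F'. card T) + card S = (\<Sum>T\<in>F. card T) + card S'" by simp
qed

lemma pigeon:
  assumes "finite F" "inj_on f {S\<in>F. P S}" "\<And>S. S \<in> F \<Longrightarrow> P S \<Longrightarrow> Q (f S)"
    "card {S\<in>F. Q S} < card {S\<in>F. P S}"
  shows "\<exists>S\<in>F. P S \<and> f S \<notin> F"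
proof (rule ccontr)
  assume "\<not> ?thesis"
  then have "f ` {S\<in>F. P S} \<subseteq> {S\<in>F. Q S}" using assms(3) by auto
  then have "card (f ` {S\<in>F. P S}) \<le> card {S\<in>F. Q S}" using assms(1) by (intro card_mono) auto
  then show False using card_image[OF assms(2)] assms(4) by simp
qed


definition phi :: "nat set \<Rightarrow> nat \<Rightarrow> nat set set \<Rightarrow> nat" where
  "phi C r F = (\<Sum>a\<in>C. (deg F a - r) + (r - deg F a))"

lemma deg_le_card: "finite F \<Longrightarrow> deg F a \<le> card F"
  unfolding deg_def by (intro card_mono) auto

lemma deg_split:
  assumes "finite F"
  shows "deg F c = card {S\<in>F. c \<in> S \<and> a \<notin> S} + card {S\<in>F. c \<in> S \<and> a \<in> S}"
proof -
  have "{S\<in>F. c \<in> S} = {S\<in>F. c \<in> S \<and> a \<notin> S} \<union> {S\<in>F. c \<in> S \<and> a \<in> S}" by auto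
  then show ?thesis unfolding deg_def using assms by (subst card_Un_disjoint[symmetric]) auto
qed

lemma balance:
  assumes finC: "finite C" and nr: "2*r \<le> n"
  shows "F \<subseteq> Pow C \<Longrightarrow> card F = n \<Longrightarrow> (\<Sum>S\<in>F. card S) \<le> card C * r
    \<Longrightarrow> \<exists>F'. F' \<subseteq> Pow C \<and> card F' = n \<and> (\<forall>a\<in>C. deg F' a = r)"
proof (induction "phi C r F" arbitrary: F rule: less_induct)
  case less
  note F = less.prems
  have finF: "finite F" using F(1) finC by (metis finite_Pow_iff finite_subset)
  have wt: "(\<Sum>a\<in>C. deg F a) \<le> (\<Sum>a\<in>C. r)" using F(3) double_count[OF finC F(1)] by simp
  show ?case
  proof (cases "\<forall>a\<in>C. deg F a = r")
    case True then show ?thesis using F by blast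
  next
    case False
    obtain a where a: "a \<in> C" "deg F a < r"
    proof (rule ccontr)
      assume "\<not> thesis"
      then have ge: "\<forall>a\<in>C. r \<le> deg F a" using that by (meson not_le)
      obtain c where "c \<in> C" "deg F c \<noteq> r" using False by blast
      then have "r < deg F c" using ge by fastforce
      then have "(\<Sum>a\<in>C. r) < (\<Sum>a\<in>C. deg F a)"
        using sum_strict_mono_ex1[OF finC, of "\<lambda>_. r" "deg F"] ge \<open>c \<in> C\<close> by blast
      then show False using wt by simp
    qed
    show ?thesis
    proof (cases "\<exists>c\<in>C. r < deg F c")
      case True
      then obtain c where c: "c \<in> C" "r < deg F c" by blast
      have ac: "a \<noteq> c" using a c by auto
      define f where "f S = insert a (S - {c})" for S
      have "card {S\<in>F. a \<in> S \<and> c \<notin> S} < card {S\<in>F. c \<in> S \<and> a \<notin> S}"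
        using deg_split[OF finF, of c a] deg_split[OF finF, of a c] a c
        by (simp add: conj_commute)
      moreover have "inj_on f {S\<in>F. c \<in> S \<and> a \<notin> S}"
      proof (rule inj_onI)
        fix S T assume "S \<in> {S\<in>F. c \<in> S \<and> a \<notin> S}" "T \<in> {S\<in>F. c \<in> S \<and> a \<notin> S}" "f S = f T"
        then have "S - {c} = T - {c}" "c \<in> S" "c \<in> T" unfolding f_def
          by (auto simp: insert_ident)
        then show "S = T" by (metis insert_Diff)
      qed
      ultimately obtain S where S: "S \<in> F" "c \<in> S" "a \<notin> S" "f S \<notin> F"
        using pigeon[OF finF, of f "\<lambda>S. c \<in> S \<and> a \<notin> S" "\<lambda>S. a \<in> S \<and> c \<notin> S"] ac unfolding f_def by auto
      have fS: "f S \<subseteq> C" using S F(1) a unfolding f_def by auto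
      define F' where "F' = insert (f S) (F - {S})"
      note R = replace_props[OF finC F(1) S(1) S(4) fS, folded F'_def]
      have wF: "(\<Sum>T\<in>F'. card T) = (\<Sum>T\<in>F. card T)"
      proof -
        have finS: "finite S" using S finF F(1) finC by (meson PowD finite_subset subsetD)
        have "card (f S) = Suc (card (S - {c}))" unfolding f_def using finS S(3) by (simp add: card_insert_if)
        also have "\<dots> = card S" using card_Suc_Diff1[OF finS S(2)] by simp
        finally have "card (f S) = card S" .
        then show ?thesis using R(4) by simp
      qed
      have "phi C r F' < phi C r F" unfolding phi_def
      proof (rule sum_strict_mono_ex1[OF finC])
        show "\<forall>x\<in>C. deg F' x - r + (r - deg F' x) \<le> deg F x - r + (r - deg F x)"
        proof
          fix x assume "x \<in> C"
          have E: "deg F' x + (if x \<in> S then 1 else 0) = deg F x + (if x \<in> f S then 1 else 0)" by (rule R(3))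
          have fx: "(x \<in> f S) = (x = a \<or> (x \<in> S \<and> x \<noteq> c))" unfolding f_def by auto
          consider "x = a" | "x = c" | "x \<noteq> a" "x \<noteq> c" by blast
          then show "deg F' x - r + (r - deg F' x) \<le> deg F x - r + (r - deg F x)"
          proof cases
            case 1
            then have "deg F' x = deg F x + 1" using E fx S(3) by simp
            then show ?thesis using a 1 by simp
          next
            case 2
            then have "deg F' x + 1 = deg F x" using E fx S(2) ac by simp
            then show ?thesis using c 2 by simp
          next
            case 3
            then have "deg F' x = deg F x" using E fx by (cases "x \<in> S") simp_all
            then show ?thesis by simp
          qed
        qed
        have "deg F' a + 0 = deg F a + 1" using R(3)[of a] S unfolding f_def by simp
        then show "\<exists>x\<in>C. deg F' x - r + (r - deg F' x) < deg F x - r + (r - deg F x)"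
          using a by (intro bexI[of _ a]) auto
      qed
      then show ?thesis using less.hyps[of F'] R(1,2) F wF by auto
    next
      case False
      then have le: "\<forall>c\<in>C. deg F c \<le> r" by auto
      define f where "f S = insert a S" for S
      have "{S\<in>F. a \<notin> S} = F - {S\<in>F. a \<in> S}" by auto
      then have "card {S\<in>F. a \<notin> S} = n - deg F a" unfolding deg_def using F(2) finF
        by (simp add: card_Diff_subset)
      then have "card {S\<in>F. a \<in> S} < card {S\<in>F. a \<notin> S}" using a nr unfolding deg_def by linarith
      moreover have "inj_on f {S\<in>F. a \<notin> S}" unfolding f_def
        by (rule inj_onI) (metis (no_types, lifting) mem_Collect_eq insert_ident)
      ultimately obtain S where S: "S \<in> F" "a \<notin> S" "f S \<notin> F"
        using pigeon[OF finF, of f "\<lambda>S. a \<notin> S" "\<lambda>S. a \<in> S"] unfolding f_def by auto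
      have fS: "f S \<subseteq> C" using S F(1) a unfolding f_def by auto
      define F' where "F' = insert (f S) (F - {S})"
      note R = replace_props[OF finC F(1) S(1) S(3) fS, folded F'_def]
      have "(\<Sum>a\<in>C. deg F a) < (\<Sum>a\<in>C. r)"
        using sum_strict_mono_ex1[OF finC, of "deg F" "\<lambda>_. r"] le a by blast
      then have "(\<Sum>T\<in>F. card T) < card C * r" using double_count[OF finC F(1)] by simp
      moreover have "card (f S) = card S + 1"
      proof -
        have "finite S" using S finF F(1) finC by (meson PowD finite_subset subsetD)
        then show ?thesis using S(2) unfolding f_def by simp
      qed
      ultimately have wF: "(\<Sum>T\<in>F'. card T) \<le> card C * r" using R(4) by simp
      have "phi C r F' < phi C r F" unfolding phi_def
      proof (rule sum_strict_mono_ex1[OF finC])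
        show "\<forall>x\<in>C. deg F' x - r + (r - deg F' x) \<le> deg F x - r + (r - deg F x)"
        proof
          fix x assume "x \<in> C"
          have E: "deg F' x + (if x \<in> S then 1 else 0) = deg F x + (if x \<in> f S then 1 else 0)" by (rule R(3))
          show "deg F' x - r + (r - deg F' x) \<le> deg F x - r + (r - deg F x)"
          proof (cases "x = a")
            case True
            then have "deg F' x = deg F x + 1" using E S(2) unfolding f_def by simp
            then show ?thesis using a True by simp
          next
            case False
            then have "deg F' x = deg F x" using E unfolding f_def by (cases "x \<in> S") simp_all
            then show ?thesis by simp
          qed
        qed
        have "deg F' a + 0 = deg F a + 1" using R(3)[of a] S unfolding f_def by simp
        then show "\<exists>x\<in>C. deg F' x - r + (r - deg F' x) < deg F x - r + (r - deg F x)"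
          using a by (intro bexI[of _ a]) auto
      qed
      then show ?thesis using less.hyps[of F'] R(1,2) F wF by auto
    qed
  qed
qed


lemma fix_iff:
  assumes "g permutes X" "g ` A = A"
  shows "g x \<in> A \<longleftrightarrow> x \<in> A"
proof -
  have "inj g" using permutes_inj[OF assms(1)] .
  then show ?thesis using assms(2) by (metis inj_image_mem_iff)
qed

lemma sym_inj:
  assumes base: "is_base (Sym N) \<Omega> B"
  shows "inj_on (\<lambda>x. {A\<in>B. x \<in> A}) {1..N}"
proof (rule inj_onI, rule ccontr)
  fix x y assume xy: "x \<in> {1..N}" "y \<in> {1..N}" "{A\<in>B. x \<in> A} = {A\<in>B. y \<in> A}" "x \<noteq> y"
  have iff: "\<And>A. A \<in> B \<Longrightarrow> x \<in> A \<longleftrightarrow> y \<in> A" using xy(3) by blast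
  have "transpose x y \<in> Sym N" unfolding Sym_def using xy by (simp add: permutes_swap_id)
  moreover have "\<forall>A\<in>B. transpose x y ` A = A" using iff by simp
  ultimately have "transpose x y = id" using base unfolding is_base_def by blast
  then have "transpose x y x = x" by simp
  then show False using xy(4) by simp
qed

lemma alt_inj:
  assumes base: "is_base (Alt N) \<Omega> B"
  shows "\<exists>D. D \<subseteq> {1..N} \<and> N \<le> card D + 1 \<and> inj_on (\<lambda>x. {A\<in>B. x \<in> A}) D"
proof (cases "inj_on (\<lambda>x. {A\<in>B. x \<in> A}) {1..N}")
  case True then show ?thesis by (intro exI[of _ "{1..N}"]) auto
next
  case False
  define \<sigma> where "\<sigma> x = {A\<in>B. x \<in> A}" for x
  obtain x y where xy: "x \<in> {1..N}" "y \<in> {1..N}" "\<sigma> x = \<sigma> y" "x \<noteq> y"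
    using False unfolding inj_on_def \<sigma>_def by blast
  have iffs: "\<And>u v A. \<sigma> u = \<sigma> v \<Longrightarrow> A \<in> B \<Longrightarrow> u \<in> A \<longleftrightarrow> v \<in> A" unfolding \<sigma>_def by blast
  define D where "D = {1..N} - {y}"
  have cD: "card D + 1 = N" unfolding D_def using xy(2) by (simp add: card_Diff_singleton)
  have "inj_on \<sigma> D"
  proof (rule inj_onI, rule ccontr)
    fix u v assume uv: "u \<in> D" "v \<in> D" "\<sigma> u = \<sigma> v" "u \<noteq> v"
    obtain w w' where ww: "w \<in> D" "w' \<in> D" "\<sigma> w = \<sigma> w'" "w \<noteq> w'" "w \<noteq> x"
    proof (cases "u = x")
      case True then show ?thesis using that[of v u] uv by auto
    next
      case False then show ?thesis using that[of u v] uv by auto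
    qed
    have wy: "w \<noteq> y" "w' \<noteq> y" "w \<in> {1..N}" "w' \<in> {1..N}" using ww unfolding D_def by auto
    define g where "g = transpose x y \<circ> transpose w w'"
    have "g permutes {1..N}" unfolding g_def
      using xy wy by (intro permutes_compose permutes_swap_id) auto
    moreover have "evenperm g" unfolding g_def
      using xy(4) ww(4) by (simp add: evenperm_comp permutation_swap_id evenperm_swap)
    ultimately have "g \<in> Alt N" unfolding Alt_def by simp
    moreover have "\<forall>A\<in>B. g ` A = A"
    proof
      fix A assume "A \<in> B"
      then have "x \<in> A \<longleftrightarrow> y \<in> A" "w \<in> A \<longleftrightarrow> w' \<in> A" using iffs[OF xy(3) \<open>A \<in> B\<close>] iffs[OF ww(3) \<open>A \<in> B\<close>] by simp_all
      moreover have "g ` A = transpose x y ` (transpose w w' ` A)" unfolding g_def by (simp add: image_comp)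
      ultimately show "g ` A = A" by simp
    qed
    ultimately have "g = id" using base unfolding is_base_def by blast
    moreover have "g w \<noteq> w"
    proof (cases "w' = x")
      case True then show ?thesis unfolding g_def using ww wy by simp
    next
      case False then show ?thesis unfolding g_def using ww wy by (simp add: transpose_def)
    qed
    ultimately show False by simp
  qed
  then have "inj_on (\<lambda>x. {A\<in>B. x \<in> A}) D" unfolding \<sigma>_def[abs_def] .
  then show ?thesis using cD unfolding D_def by (intro exI[of _ "{1..N} - {y}"]) auto
qed

lemma lower_from_base:
  assumes finB: "finite B" and BR: "B \<subseteq> r_subsets N r" and D: "D \<subseteq> {1..N}"
    and inj: "inj_on (\<lambda>x. {A\<in>B. x \<in> A}) D" and nD: "n \<le> card D" and nr: "2*r \<le> n" and r: "0 < r"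
  shows "0 < card B \<and> good_l n r (card B)"
proof -
  define \<sigma> where "\<sigma> x = {A\<in>B. x \<in> A}" for x
  have finD: "finite D" using D finite_subset by blast
  obtain D' where D': "D' \<subseteq> D" "card D' = n" using nD by (metis obtain_subset_with_card_n)
  have inj': "inj_on \<sigma> D'" using inj_on_subset[OF inj D'(1)] unfolding \<sigma>_def[abs_def] .
  define V where "V = \<sigma> ` D'"
  have V1: "V \<subseteq> Pow B" unfolding V_def \<sigma>_def by auto
  have V2: "card V = n" unfolding V_def using card_image[OF inj'] D' by simp
  have BP: "B \<subseteq> Pow {1..N}" using BR unfolding r_subsets_def by auto
  have "(\<Sum>v\<in>V. card v) = (\<Sum>x\<in>D'. card (\<sigma> x))" unfolding V_def using sum.reindex[OF inj'] by simp
  also have "\<dots> \<le> (\<Sum>x\<in>{1..N}. card (\<sigma> x))" using D D' by (intro sum_mono2) auto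
  also have "\<dots> = (\<Sum>x\<in>{1..N}. deg B x)" unfolding deg_def \<sigma>_def by simp
  also have "\<dots> = (\<Sum>A\<in>B. card A)" using double_count[of "{1..N}" B] BP by simp
  also have "\<dots> = (\<Sum>A\<in>B. r)" using BR unfolding r_subsets_def by (intro sum.cong) auto
  also have "\<dots> = card B * r" by simp
  finally show ?thesis using lower_good[OF finB V1 V2 _ nr r] by simp
qed


lemma upper_bases:
  assumes good: "good_l n r l" and nr: "2*r \<le> n" and r: "0 < r"
  shows "\<exists>B. finite B \<and> card B \<le> l \<and> is_base (Sym n) (r_subsets n r) B
            \<and> is_base (Alt (n+1)) (r_subsets (n+1) r) B"
proof -
  obtain F where F: "F \<subseteq> Pow {1..l}" "card F = n" "(\<Sum>S\<in>F. card S) \<le> l * r"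
    using construct_family[OF good] by blast
  obtain F' where F': "F' \<subseteq> Pow {1..l}" "card F' = n" "\<forall>a\<in>{1..l}. deg F' a = r"
    using balance[of "{1..l}" r n F] F nr by auto
  have finF': "finite F'" using F'(1) finite_subset by blast
  obtain h where h: "bij_betw h {1..n} F'" using ex_bij_betw_nat_finite_1[OF finF'] F'(2) by auto
  have hinj: "inj_on h {1..n}" and himg: "h ` {1..n} = F'" using h by (auto simp: bij_betw_def)
  have hsub: "\<And>x. x \<in> {1..n} \<Longrightarrow> h x \<subseteq> {1..l}" using himg F'(1) by blast
  define Aof where "Aof a = {x\<in>{1..n}. a \<in> h x}" for a
  define B where "B = Aof ` {1..l}"
  have Asub: "Aof a \<subseteq> {1..n}" for a unfolding Aof_def by auto
  have cardA: "card (Aof a) = r" if a: "a \<in> {1..l}" for a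
  proof -
    have "h ` Aof a = {S\<in>F'. a \<in> S}" unfolding Aof_def using himg by auto
    moreover have "inj_on h (Aof a)" using inj_on_subset[OF hinj Asub] .
    ultimately have "card (Aof a) = card {S\<in>F'. a \<in> S}" by (metis card_image)
    then show ?thesis using F'(3) a unfolding deg_def by simp
  qed
  have key: "x = y" if xy: "x \<in> {1..n}" "y \<in> {1..n}" "\<forall>a\<in>{1..l}. x \<in> Aof a \<longleftrightarrow> y \<in> Aof a" for x y
  proof -
    have "h x = h y"
    proof (intro set_eqI iffI)
      fix z assume "z \<in> h x"
      then have "z \<in> {1..l}" "x \<in> Aof z" using hsub[OF xy(1)] xy(1) unfolding Aof_def by auto
      then show "z \<in> h y" using xy(3) unfolding Aof_def by auto
    next
      fix z assume "z \<in> h y"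
      then have "z \<in> {1..l}" "y \<in> Aof z" using hsub[OF xy(2)] xy(2) unfolding Aof_def by auto
      then show "z \<in> h x" using xy(3) unfolding Aof_def by auto
    qed
    then show ?thesis using hinj xy(1,2) by (meson inj_onD)
  qed
  have B1: "B \<subseteq> r_subsets n r" unfolding B_def r_subsets_def using cardA Asub by auto
  have "r_subsets n r \<subseteq> r_subsets (n+1) r" unfolding r_subsets_def by auto
  then have B2: "B \<subseteq> r_subsets (n+1) r" using B1 by blast
  have finB: "finite B" unfolding B_def by simp
  have cB: "card B \<le> l" unfolding B_def using card_image_le[of "{1..l}" Aof] by simp
  have fixs: "\<forall>a\<in>{1..l}. (g x \<in> Aof a \<longleftrightarrow> x \<in> Aof a)"
    if g: "g permutes X" "\<forall>A\<in>B. g ` A = A" for g X x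
  proof
    fix a assume "a \<in> {1..l}"
    then have "g ` Aof a = Aof a" using g(2) unfolding B_def by simp
    then show "g x \<in> Aof a \<longleftrightarrow> x \<in> Aof a" by (rule fix_iff[OF g(1)])
  qed
  have S: "is_base (Sym n) (r_subsets n r) B" unfolding is_base_def
  proof (intro conjI ballI impI B1)
    fix g assume g: "g \<in> Sym n" "\<forall>A\<in>B. g ` A = A"
    have gp: "g permutes {1..n}" using g(1) unfolding Sym_def by simp
    show "g = id"
    proof
      fix x show "g x = id x"
      proof (cases "x \<in> {1..n}")
        case True
        then have "g x \<in> {1..n}" using permutes_in_image[OF gp] by simp
        then show ?thesis using key[of "g x" x] True fixs[OF gp g(2)] by simp
      next
        case False then show ?thesis using permutes_not_in[OF gp] by simp
      qed
    qed
  qed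
  have A: "is_base (Alt (n+1)) (r_subsets (n+1) r) B" unfolding is_base_def
  proof (intro conjI ballI impI B2)
    fix g assume g: "g \<in> Alt (n+1)" "\<forall>A\<in>B. g ` A = A"
    have gp: "g permutes {1..n+1}" and ev: "evenperm g" using g(1) unfolding Alt_def by auto
    have gin: "\<And>x. x \<in> {1..n+1} \<Longrightarrow> g x \<in> {1..n+1}" using permutes_in_image[OF gp] by simp
    have gout: "\<And>x. x \<notin> {1..n+1} \<Longrightarrow> g x = x" using permutes_not_in[OF gp] by simp
    have ginj: "inj g" using permutes_inj[OF gp] .
    have fx: "\<forall>a\<in>{1..l}. (g x \<in> Aof a \<longleftrightarrow> x \<in> Aof a)" for x using fixs[OF gp g(2)] .
    have notin: "n+1 \<notin> Aof a" for a unfolding Aof_def by simp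
    have fixn: "g x = x" if x: "x \<in> {1..n}" "g x \<noteq> n+1" for x
    proof -
      have "g x \<in> {1..n}" using gin[of x] x by auto
      then show ?thesis using key[of "g x" x] x fx[of x] by simp
    qed
    show "g = id"
    proof (cases "g (n+1) = n+1")
      case True
      show ?thesis
      proof
        fix x show "g x = id x"
        proof (cases "x \<in> {1..n}")
          case xin: True
          have "g x \<noteq> n+1"
          proof
            assume "g x = n+1"
            then have "g x = g (n+1)" using True by simp
            then have "x = n+1" using ginj by (simp add: inj_eq)
            then show False using xin by simp
          qed
          then show ?thesis using fixn xin by simp
        next
          case False
          then have "x = n+1 \<or> x \<notin> {1..n+1}" by auto
          then show ?thesis using True gout by auto
        qed
      qed
    next
      case False
      define y where "y = g (n+1)"
      have y: "y \<in> {1..n}" "y \<noteq> n+1" using gin[of "n+1"] False unfolding y_def by auto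
      have gy: "g y = n+1"
      proof (rule ccontr)
        assume "g y \<noteq> n+1"
        then have "g y = y" using fixn y by simp
        then have "y = n+1" using ginj unfolding y_def by (metis inj_eq)
        then show False using y by simp
      qed
      have "g = transpose y (n+1)"
      proof
        fix x show "g x = transpose y (n+1) x"
        proof (cases "x = y \<or> x = n+1")
          case True then show ?thesis using gy y_def by auto
        next
          case False
          show ?thesis
          proof (cases "x \<in> {1..n}")
            case True
            then have "g x \<noteq> n+1" using gy False ginj by (metis inj_eq)
            then show ?thesis using fixn True False by simp
          next
            case xn: False
            then have "x \<notin> {1..n+1}" using False by auto
            then show ?thesis using gout False by simp
          qed
        qed
      qed
      then have "\<not> evenperm g" using y by (simp add: evenperm_swap)
      then show ?thesis using ev by simp
    qed
  qed
  show ?thesis using S A finB cB by blast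
qed

theorem theorem1p1:
  fixes n r l :: nat
  assumes "0 < n" and "0 < r" and "n \<ge> 2 * r"
    and "0 < l" and "good_l n r l"
    and "\<forall>l'. 0 < l' \<and> l' < l \<longrightarrow> \<not> good_l n r l'"
  shows "base_size (Sym n) (r_subsets n r) = l
       \<and> base_size (Alt (n + 1)) (r_subsets (n + 1) r) = l"
proof -
  have nr: "2 * r \<le> n" using assms(3) by simp
  obtain B0 where B0: "finite B0" "card B0 \<le> l" "is_base (Sym n) (r_subsets n r) B0"
      "is_base (Alt (n+1)) (r_subsets (n+1) r) B0"
    using upper_bases[OF assms(5) nr assms(2)] by blast
  have lowS: "l \<le> card B" if B: "is_base (Sym n) (r_subsets n r) B" "finite B" for B
  proof -
    have BR: "B \<subseteq> r_subsets n r" using B(1) unfolding is_base_def by simp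
    have "0 < card B \<and> good_l n r (card B)"
      using lower_from_base[OF B(2) BR order_refl sym_inj[OF B(1)] _ nr assms(2)] by simp
    then show ?thesis using assms(6) by (meson not_le)
  qed
  have lowA: "l \<le> card B" if B: "is_base (Alt (n+1)) (r_subsets (n+1) r) B" "finite B" for B
  proof -
    have BR: "B \<subseteq> r_subsets (n+1) r" using B(1) unfolding is_base_def by simp
    obtain D where D: "D \<subseteq> {1..n+1}" "n + 1 \<le> card D + 1" "inj_on (\<lambda>x. {A\<in>B. x \<in> A}) D"
      using alt_inj[OF B(1)] by blast
    have "0 < card B \<and> good_l n r (card B)"
      using lower_from_base[OF B(2) BR D(1) D(3) _ nr assms(2)] D(2) by simp
    then show ?thesis using assms(6) by (meson not_le)
  qed
  have cS: "card B0 = l" using lowS[OF B0(3) B0(1)] B0(2) by simp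
  have "base_size (Sym n) (r_subsets n r) = l" unfolding base_size_def
  proof (rule Least_equality)
    show "\<exists>B. is_base (Sym n) (r_subsets n r) B \<and> finite B \<and> card B = l" using B0 cS by blast
  next
    fix y assume "\<exists>B. is_base (Sym n) (r_subsets n r) B \<and> finite B \<and> card B = y"
    then show "l \<le> y" using lowS by blast
  qed
  moreover have "base_size (Alt (n+1)) (r_subsets (n+1) r) = l" unfolding base_size_def
  proof (rule Least_equality)
    show "\<exists>B. is_base (Alt (n+1)) (r_subsets (n+1) r) B \<and> finite B \<and> card B = l" using B0 cS by blast
  next
    fix y assume "\<exists>B. is_base (Alt (n+1)) (r_subsets (n+1) r) B \<and> finite B \<and> card B = y"
    then show "l \<le> y" using lowA by blast
  qed
  ultimately show ?thesis by simp
qed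

end
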